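(* Let $a,b,e\in\mathbb{R}$ and let $\alpha_i(t)$ ($i=1,\dots,5$) be scalar continuous functions (not necessarily odd). Consider the systems $$\text{(S5)}\quad\begin{aligned}\dot x&=(ax+by+xz)(1+\alpha_1(t))+x(a+z)\alpha_2(t)+y\alpha_3(t),\\ \dot y&=(-bx+ay+yz)(1+\alpha_1(t))+y(a+z)\alpha_2(t)-x\alpha_3(t),\\ \dot z&=(ez-x^2-y^2-z^2)(1+\alpha_1(t)+\alpha_2(t));\end{aligned}$$ $$\text{(S6)}\quad\begin{aligned}\dot x&=(ax+by+xz)(1+\alpha_1(t))+x(a+z)\alpha_2(t)+y\alpha_3(t)-y(x^2+y^2)(4az+x^2+y^2+2z^2)\alpha_4(t),\\ \dot y&=(-bx+ay+yz)(1+\alpha_1(t))+y(a+z)\alpha_2(t)-x\alpha_3(t)+x(x^2+y^2)(4az+x^2+y^2+2z^2)\alpha_4(t),\\ \dot z&=-(2az+x^2+y^2+z^2)(1+\alpha_1(t)+\alpha_2(t));\end{aligned}$$ $$\text{(S7)}\quad\begin{aligned}\dot x&=(ax+xz)(1+\alpha_1(t))+y\alpha_2(t)+y(4az+x^2+y^2+2z^2)\big(x^2\alpha_3(t)+xy\alpha_4(t)+y^2\alpha_5(t)\big),\\ \dot y&=(ay+yz)(1+\alpha_1(t))-x\alpha_2(t)-x(4az+x^2+y^2+2z^2)\big(x^2\alpha_3(t)+xy\alpha_4(t)+y^2\alpha_5(t)\big),\\ \dot z&=-(2az+x^2+y^2+z^2)(1+\alpha_1(t)).\end{aligned}$$ (i)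 If $e=0$ and there is a constant $l>-1$ with $\alpha_1(t)+\alpha_2(t)\ge l$ for all $t\ge0$, then the solution $x=y=z=0$ of (S5) is unstable in the sense of Lyapunov. (ii) If $a=0$ and there is a constant $l>-1$ with $\alpha_1(t)+\alpha_2(t)\ge l$ for all $t\ge0$, then the solution $x=y=z=0$ of (S6) is unstable in the sense of Lyapunov. (iii) If $a=0$ and there is a constant $l>-1$ with $\alpha_1(t)\ge l$ for all $t\ge0$, then the solution $x=y=z=0$ of (S7) is unstable in the sense of Lyapunov. *)

theory Defs
  imports "HOL-Analysis.Analysis"
begin

type_synonym state = "real \<times> real \<times> real"

definition is_solution ::
  "(real \<Rightarrow> state \<Rightarrow> state) \<Rightarrow> real \<Rightarrow> state \<Rightarrow> real set \<Rightarrow> (real \<Rightarrow> state) \<Rightarrow> bool" where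
  "is_solution f t0 x0 J x \<longleftrightarrow>
     is_interval J \<and> t0 \<in> J \<and> J \<subseteq> {t0..} \<and> x t0 = x0 \<and>
     (\<forall>t\<in>J. (x has_vector_derivative f t (x t)) (at t within J))"

definition lyapunov_stable :: "(real \<Rightarrow> state \<Rightarrow> state) \<Rightarrow> bool" where
  "lyapunov_stable f \<longleftrightarrow>
     (\<forall>t0\<ge>0. \<forall>\<epsilon>>0. \<exists>\<delta>>0. \<forall>x0 J x.
        norm x0 < \<delta> \<and> is_solution f t0 x0 J x \<longrightarrow> (\<forall>t\<in>J. norm (x t) < \<epsilon>))"

definition S5 :: "real \<Rightarrow> real \<Rightarrow> real \<Rightarrow> (real \<Rightarrow> real) \<Rightarrow> (real \<Rightarrow> real) \<Rightarrow> (real \<Rightarrow> real)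
   \<Rightarrow> real \<Rightarrow> state \<Rightarrow> state" where
  "S5 a b e \<alpha>1 \<alpha>2 \<alpha>3 t p = (case p of (x, y, z) \<Rightarrow>
     ((a*x + b*y + x*z) * (1 + \<alpha>1 t) + x*(a + z)*\<alpha>2 t + y*\<alpha>3 t,
      (-b*x + a*y + y*z) * (1 + \<alpha>1 t) + y*(a + z)*\<alpha>2 t - x*\<alpha>3 t,
      (e*z - x^2 - y^2 - z^2) * (1 + \<alpha>1 t + \<alpha>2 t)))"

definition S6 :: "real \<Rightarrow> real \<Rightarrow> (real \<Rightarrow> real) \<Rightarrow> (real \<Rightarrow> real) \<Rightarrow> (real \<Rightarrow> real)
   \<Rightarrow> (real \<Rightarrow> real) \<Rightarrow> real \<Rightarrow> state \<Rightarrow> state" where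
  "S6 a b \<alpha>1 \<alpha>2 \<alpha>3 \<alpha>4 t p = (case p of (x, y, z) \<Rightarrow>
     ((a*x + b*y + x*z) * (1 + \<alpha>1 t) + x*(a + z)*\<alpha>2 t + y*\<alpha>3 t
        - y*(x^2 + y^2)*(4*a*z + x^2 + y^2 + 2*z^2)*\<alpha>4 t,
      (-b*x + a*y + y*z) * (1 + \<alpha>1 t) + y*(a + z)*\<alpha>2 t - x*\<alpha>3 t
        + x*(x^2 + y^2)*(4*a*z + x^2 + y^2 + 2*z^2)*\<alpha>4 t,
      -(2*a*z + x^2 + y^2 + z^2) * (1 + \<alpha>1 t + \<alpha>2 t)))"

definition S7 :: "real \<Rightarrow> (real \<Rightarrow> real) \<Rightarrow> (real \<Rightarrow> real) \<Rightarrow> (real \<Rightarrow> real) \<Rightarrow> (real \<Rightarrow> real)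
   \<Rightarrow> (real \<Rightarrow> real) \<Rightarrow> real \<Rightarrow> state \<Rightarrow> state" where
  "S7 a \<alpha>1 \<alpha>2 \<alpha>3 \<alpha>4 \<alpha>5 t p = (case p of (x, y, z) \<Rightarrow>
     ((a*x + x*z) * (1 + \<alpha>1 t) + y*\<alpha>2 t
        + y*(4*a*z + x^2 + y^2 + 2*z^2)*(x^2*\<alpha>3 t + x*y*\<alpha>4 t + y^2*\<alpha>5 t),
      (a*y + y*z) * (1 + \<alpha>1 t) - x*\<alpha>2 t
        - x*(4*a*z + x^2 + y^2 + 2*z^2)*(x^2*\<alpha>3 t + x*y*\<alpha>4 t + y^2*\<alpha>5 t),
      -(2*a*z + x^2 + y^2 + z^2) * (1 + \<alpha>1 t)))"

end

theory Submission
  imports Defs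
begin

lemma blowup:
  fixes f :: "real \<Rightarrow> state \<Rightarrow> state" and c :: "real \<Rightarrow> real"
  assumes cc: "continuous_on UNIV c" and m: "m > 0" and cm: "\<forall>t\<ge>0. c t \<ge> m"
    and f: "\<forall>t z. f t (0,0,z) = (0,0,-(z^2) * c t)"
  shows "\<not> lyapunov_stable f"
proof
  assume "lyapunov_stable f"
  then obtain \<delta> where \<delta>: "\<delta>>0" and H: "\<And>x0 J x. norm x0 < \<delta> \<Longrightarrow> is_solution f 0 x0 J x \<Longrightarrow> (\<forall>t\<in>J. norm (x t) < 1)"
    unfolding lyapunov_stable_def by (metis order_refl zero_less_one)
  define d where "d = min \<delta> (1/2) / 2"
  have d: "0<d" "d<\<delta>" "d < 1" using \<delta> by (auto simp: d_def)
  define C where "C t = integral {0..t} c" for t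
  define K where "K = (1/d)/m"
  have K: "K \<ge> 0" using d m by (simp add: K_def)
  have cont: "continuous_on {a..b} c" for a b using cc by (rule continuous_on_subset) auto
  have "integral {0..K} (\<lambda>_. m) \<le> integral {0..K} c"
    by (rule integral_le) (use cm cont in \<open>auto intro: integrable_continuous_interval\<close>)
  then have CK: "C K \<ge> 1/d" using K m d by (simp add: C_def K_def)
  have Ccont: "continuous_on {0..K} C" unfolding C_def
    by (rule indefinite_integral_continuous_1, rule integrable_continuous_interval, rule cont)
  have "C 0 \<le> 1/d - 1" using d by (simp add: C_def)
  then obtain T where T: "0 \<le> T" "T \<le> K" "C T = 1/d - 1"
    using IVT'[of C 0 "1/d - 1" K, OF _ _ K Ccont] CK by auto
  have Cmono: "C t \<le> C T" if "t \<in> {0..T}" for t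
    unfolding C_def
    by (rule integral_subset_le) (use that cm m cont in \<open>auto intro: integrable_continuous_interval dest: spec[of _ _] order.trans[OF less_imp_le[OF m]]\<close>)
  define z where "z t = 1/(C t - 1/d)" for t
  define x where "x t = (0::real,0::real,z t)" for t
  have "is_solution f 0 (0,0,-d) {0..T} x"
    unfolding is_solution_def
  proof (intro conjI ballI)
    show "x 0 = (0,0,-d)" using d by (simp add: x_def z_def C_def)
    fix t assume t: "t \<in> {0..T}"
    have neg: "C t - 1/d < 0" using Cmono[OF t] T by simp
    have dC: "(C has_real_derivative c t) (at t within {0..T})"
      unfolding C_def has_real_derivative_iff_has_vector_derivative
      by (rule integral_has_vector_derivative[OF cont t])
    have "(z has_real_derivative (-(c t)/(C t - 1/d)^2)) (at t within {0..T})"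
      unfolding z_def using neg
      by (auto intro!: derivative_eq_intros dC simp: power2_eq_square)
    then have dz: "(z has_vector_derivative (-(z t ^2) * c t)) (at t within {0..T})"
      unfolding has_real_derivative_iff_has_vector_derivative
      by (simp add: z_def power_divide)
    show "(x has_vector_derivative f t (x t)) (at t within {0..T})"
      unfolding x_def f
      by (auto intro!: derivative_eq_intros dz simp: f)
  qed (auto simp: is_interval_cc T)
  moreover have "norm ((0::real,0::real,-d)) < \<delta>" using d by (simp add: norm_Pair)
  ultimately have "norm (x T) < 1" using H[of "(0,0,-d)" "{0..T}" x] T by auto
  moreover have "x T = (0,0,-1)" using T by (simp add: x_def z_def)
  ultimately show False by (simp add: norm_Pair)
qed

theorem theorem3:
  fixes a b e :: real and \<alpha>1 \<alpha>2 \<alpha>3 \<alpha>4 \<alpha>5 :: "real \<Rightarrow> real"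
  assumes "continuous_on UNIV \<alpha>1" "continuous_on UNIV \<alpha>2" "continuous_on UNIV \<alpha>3"
      "continuous_on UNIV \<alpha>4" "continuous_on UNIV \<alpha>5"
  shows "((e = 0 \<and> (\<exists>l>-1. \<forall>t\<ge>0. \<alpha>1 t + \<alpha>2 t \<ge> l))
           \<longrightarrow> \<not> lyapunov_stable (S5 a b e \<alpha>1 \<alpha>2 \<alpha>3))
       \<and> ((a = 0 \<and> (\<exists>l>-1. \<forall>t\<ge>0. \<alpha>1 t + \<alpha>2 t \<ge> l))
           \<longrightarrow> \<not> lyapunov_stable (S6 a b \<alpha>1 \<alpha>2 \<alpha>3 \<alpha>4))
       \<and> ((a = 0 \<and> (\<exists>l>-1. \<forall>t\<ge>0. \<alpha>1 t \<ge> l))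
           \<longrightarrow> \<not> lyapunov_stable (S7 a \<alpha>1 \<alpha>2 \<alpha>3 \<alpha>4 \<alpha>5))"
proof (intro conjI impI; elim conjE exE)
  have c12: "continuous_on UNIV (\<lambda>t. 1 + \<alpha>1 t + \<alpha>2 t)"
    using assms by (intro continuous_intros) auto
  have c1: "continuous_on UNIV (\<lambda>t. 1 + \<alpha>1 t)"
    using assms by (intro continuous_intros) auto
  {
    fix l assume "e = 0" "l > -1" "\<forall>t\<ge>0. \<alpha>1 t + \<alpha>2 t \<ge> l"
    then show "\<not> lyapunov_stable (S5 a b e \<alpha>1 \<alpha>2 \<alpha>3)"
      by (intro blowup[OF c12, of "1 + l"]) (auto simp: S5_def)
  next
    fix l assume "a = 0" "l > -1" "\<forall>t\<ge>0. \<alpha>1 t + \<alpha>2 t \<ge> l"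
    then show "\<not> lyapunov_stable (S6 a b \<alpha>1 \<alpha>2 \<alpha>3 \<alpha>4)"
      by (intro blowup[OF c12, of "1 + l"]) (auto simp: S6_def)
  next
    fix l assume "a = 0" "l > -1" "\<forall>t\<ge>0. \<alpha>1 t \<ge> l"
    then show "\<not> lyapunov_stable (S7 a \<alpha>1 \<alpha>2 \<alpha>3 \<alpha>4 \<alpha>5)"
      by (intro blowup[OF c1, of "1 + l"]) (auto simp: S7_def)
  }
qed

end
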